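(* Let $G^*=(V^*,E^* )$ be a weakly connected digraph, let $v_0\in V^*$, and let $L_0,\dots,L_\ell$ be the layers defined below; set $L_{\ell+1}=\emptyset$. Then for every directed path $Q$ in $G^*$ there exists $j\in\{0,\dots,\ell\}$ such that all vertices of $Q$ lie in $L_j\cup L_{j+1}$. In particular, if $G^*$ contains an $s$-$t$ dipath, then for some $j$ the subgraph induced by $L_j\cup L_{j+1}$ contains an $s$-$t$ dipath.
   Context: Layers: $L_0$ is the set of vertices of $V^*$ reachable from $v_0$ in $G^*$. For $j\ge1$: if $j$ is odd, $L_j$ is the set of vertices $v\in V^*\setminus\bigcup_{j'<j}L_{j'}$ that can reach some vertex of $L_{j-1}$ in $G^*$; if $j$ is even, $L_j$ is the set of vertices $v\in V^*\setminus\bigcup_{j'<j}L_{j'}$ reachable from some vertex of $L_{j-1}$ in $G^*$. The process continues until all vertices are covered; $\ell$ is the index of the last layer. *)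

theory Defs
  imports Main
begin

definition weakly_connected :: "'a set \<Rightarrow> ('a \<times> 'a) set \<Rightarrow> bool" where
  "weakly_connected V E \<longleftrightarrow> V \<noteq> {} \<and> (\<forall>u\<in>V. \<forall>v\<in>V. (u, v) \<in> (E \<union> E\<inverse>)\<^sup>*)"

definition dipath :: "'a set \<Rightarrow> ('a \<times> 'a) set \<Rightarrow> 'a list \<Rightarrow> bool" where
  "dipath V E Q \<longleftrightarrow> Q \<noteq> [] \<and> distinct Q \<and> set Q \<subseteq> V \<and>
     (\<forall>i. Suc i < length Q \<longrightarrow> (Q ! i, Q ! Suc i) \<in> E)"

text \<open>Layer construction: lay j = (L_j, L_0 \<union> ... \<union> L_j).\<close>
primrec lay :: "'a set \<Rightarrow> ('a \<times> 'a) set \<Rightarrow> 'a \<Rightarrow> nat \<Rightarrow> 'a set \<times> 'a set" where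
  "lay V E v0 0 = ({v \<in> V. (v0, v) \<in> E\<^sup>*}, {v \<in> V. (v0, v) \<in> E\<^sup>*})"
| "lay V E v0 (Suc j) =
     (let L = fst (lay V E v0 j); C = snd (lay V E v0 j);
          L' = {v \<in> V - C. if odd (Suc j) then (\<exists>u\<in>L. (v, u) \<in> E\<^sup>*)
                              else (\<exists>u\<in>L. (u, v) \<in> E\<^sup>*)}
      in (L', C \<union> L'))"

definition layer :: "'a set \<Rightarrow> ('a \<times> 'a) set \<Rightarrow> 'a \<Rightarrow> nat \<Rightarrow> 'a set" where
  "layer V E v0 j = fst (lay V E v0 j)"

definition last_layer :: "'a set \<Rightarrow> ('a \<times> 'a) set \<Rightarrow> 'a \<Rightarrow> nat" where
  "last_layer V E v0 = (LEAST l. (\<Union>i\<le>l. layer V E v0 i) = V)"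

definition layer_ext :: "'a set \<Rightarrow> ('a \<times> 'a) set \<Rightarrow> 'a \<Rightarrow> nat \<Rightarrow> 'a set" where
  "layer_ext V E v0 j = (if j \<le> last_layer V E v0 then layer V E v0 j else {})"

end

theory Submission
  imports Defs
begin

lemma lay_C: "snd (lay V E v0 j) = (\<Union>i\<le>j. layer V E v0 i)"
  by (induction j) (auto simp: Let_def layer_def atMost_Suc)

lemma layer_Suc: "layer V E v0 (Suc j) = {v \<in> V - (\<Union>i\<le>j. layer V E v0 i).
   if odd (Suc j) then (\<exists>u\<in>layer V E v0 j. (v, u) \<in> E\<^sup>*)
   else (\<exists>u\<in>layer V E v0 j. (u, v) \<in> E\<^sup>*)}"
  by (simp add: layer_def Let_def lay_C[unfolded layer_def])

lemma mem_odd: "odd (Suc j) \<Longrightarrow> v \<in> layer V E v0 (Suc j) \<longleftrightarrow>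
   v \<in> V \<and> v \<notin> (\<Union>i\<le>j. layer V E v0 i) \<and> (\<exists>u\<in>layer V E v0 j. (v, u) \<in> E\<^sup>*)"
  by (subst layer_Suc) simp

lemma mem_even: "even (Suc j) \<Longrightarrow> v \<in> layer V E v0 (Suc j) \<longleftrightarrow>
   v \<in> V \<and> v \<notin> (\<Union>i\<le>j. layer V E v0 i) \<and> (\<exists>u\<in>layer V E v0 j. (u, v) \<in> E\<^sup>*)"
  by (subst layer_Suc) simp

lemma layer_0: "layer V E v0 0 = {v \<in> V. (v0, v) \<in> E\<^sup>*}"
  by (simp add: layer_def)

lemma layer_sub: "layer V E v0 j \<subseteq> V"
  by (cases j) (auto simp: layer_0 layer_Suc)

lemma layer_disj: "i < j \<Longrightarrow> v \<in> layer V E v0 i \<Longrightarrow> v \<notin> layer V E v0 j"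
proof (cases j)
  case (Suc k)
  assume "i < j" "v \<in> layer V E v0 i"
  then show ?thesis using Suc by (auto simp: layer_Suc[of V E v0 k])
qed simp

lemma layer_uniq: "v \<in> layer V E v0 i \<Longrightarrow> v \<in> layer V E v0 j \<Longrightarrow> i = j"
  by (metis layer_disj linorder_neqE_nat)

lemma cross_step:
  "(x, y) \<in> R\<^sup>* \<Longrightarrow> x \<in> S \<Longrightarrow> y \<notin> S \<Longrightarrow> \<exists>a b. (a, b) \<in> R \<and> a \<in> S \<and> b \<notin> S"
  by (induction rule: rtrancl_induct) auto

lemma cross_inv:
  assumes "E \<subseteq> V \<times> V"
  shows "(\<forall>a b. (a,b)\<in>E \<longrightarrow> a \<in> (\<Union>i\<le>j. layer V E v0 i) \<longrightarrow> b \<notin> (\<Union>i\<le>j. layer V E v0 i)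
            \<longrightarrow> odd j \<and> a \<in> layer V E v0 j)
       \<and> (\<forall>a b. (a,b)\<in>E \<longrightarrow> a \<notin> (\<Union>i\<le>j. layer V E v0 i) \<longrightarrow> b \<in> (\<Union>i\<le>j. layer V E v0 i)
            \<longrightarrow> even j \<and> b \<in> layer V E v0 j)"
proof (induction j)
  case 0
  have C0: "(\<Union>i\<le>0. layer V E v0 i) = layer V E v0 0" by simp
  have "b \<in> layer V E v0 0" if "(a,b) \<in> E" "a \<in> layer V E v0 0" for a b
  proof -
    have "b \<in> V" using that(1) assms by blast
    moreover have "(v0, a) \<in> E\<^sup>*" using that(2) by (simp add: layer_0)
    then have "(v0, b) \<in> E\<^sup>*" using that(1) by (rule rtrancl_into_rtrancl)
    ultimately show ?thesis by (simp add: layer_0)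
  qed
  then show ?case unfolding C0 by simp
next
  case (Suc j)
  let ?C = "\<Union>i\<le>j. layer V E v0 i"
  let ?L = "layer V E v0 j"
  let ?L' = "layer V E v0 (Suc j)"
  have CS: "(\<Union>i\<le>Suc j. layer V E v0 i) = ?C \<union> ?L'"
    by (simp add: atMost_Suc Un_commute)
  have IH1: "\<And>a b. (a,b)\<in>E \<Longrightarrow> a \<in> ?C \<Longrightarrow> b \<notin> ?C \<Longrightarrow> odd j \<and> a \<in> ?L"
    using Suc.IH by blast
  have IH2: "\<And>a b. (a,b)\<in>E \<Longrightarrow> a \<notin> ?C \<Longrightarrow> b \<in> ?C \<Longrightarrow> even j \<and> b \<in> ?L"
    using Suc.IH by blast
  show ?case
  proof (cases "odd (Suc j)")
    case True
    then have ej: "even j" by simp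
    have A: "False" if h: "(a,b)\<in>E" "a \<notin> ?C \<union> ?L'" "b \<in> ?C \<union> ?L'" for a b
    proof -
      have aV: "a \<in> V" using h(1) assms by blast
      have aC: "a \<notin> ?C" and aL: "a \<notin> ?L'" using h(2) by simp_all
      show False
      proof (cases "b \<in> ?C")
        case True
        then have "b \<in> ?L" using IH2[OF h(1) aC] by simp
        moreover have "(a,b) \<in> E\<^sup>*" using h(1) by blast
        ultimately have "a \<in> ?L'" unfolding mem_odd[OF \<open>odd (Suc j)\<close>] using aV aC by blast
        then show False using aL by simp
      next
        case False
        then have "b \<in> ?L'" using h(3) by simp
        then have "\<exists>u\<in>?L. (b,u) \<in> E\<^sup>*" unfolding mem_odd[OF \<open>odd (Suc j)\<close>] by (elim conjE)
        then obtain u where u: "u \<in> ?L" "(b,u) \<in> E\<^sup>*" by (elim bexE)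
        have "(a,u) \<in> E\<^sup>*" using h(1) u(2) by (rule converse_rtrancl_into_rtrancl)
        then have "a \<in> ?L'" unfolding mem_odd[OF \<open>odd (Suc j)\<close>] using aV aC u(1) by blast
        then show False using aL by simp
      qed
    qed
    have B: "a \<in> ?L'" if h: "(a,b)\<in>E" "a \<in> ?C \<union> ?L'" "b \<notin> ?C \<union> ?L'" for a b
    proof (rule ccontr)
      assume "a \<notin> ?L'"
      then have "a \<in> ?C" using h(2) by simp
      have "b \<notin> ?C" using h(3) by simp
      then have "odd j" using IH1[OF h(1) \<open>a \<in> ?C\<close>] by simp
      then show False using ej by simp
    qed
    show ?thesis unfolding CS
    proof (rule conjI; intro allI impI)
      fix a b assume h: "(a,b)\<in>E" "a \<in> ?C \<union> ?L'" "b \<notin> ?C \<union> ?L'"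
      show "odd (Suc j) \<and> a \<in> ?L'" using B[OF h] \<open>odd (Suc j)\<close> by simp
    next
      fix a b assume h: "(a,b)\<in>E" "a \<notin> ?C \<union> ?L'" "b \<in> ?C \<union> ?L'"
      show "even (Suc j) \<and> b \<in> ?L'" using A[OF h] by (rule FalseE)
    qed
  next
    case False
    then have oj: "odd j" by simp
    have A: "False" if h: "(a,b)\<in>E" "a \<in> ?C \<union> ?L'" "b \<notin> ?C \<union> ?L'" for a b
    proof -
      have bV: "b \<in> V" using h(1) assms by blast
      have bC: "b \<notin> ?C" and bL: "b \<notin> ?L'" using h(3) by simp_all
      have ev: "even (Suc j)" using False by simp
      show False
      proof (cases "a \<in> ?C")
        case True
        then have "a \<in> ?L" using IH1[OF h(1) _ bC] by simp
        moreover have "(a,b) \<in> E\<^sup>*" using h(1) by blast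
        ultimately have "b \<in> ?L'" unfolding mem_even[OF ev] using bV bC by blast
        then show False using bL by simp
      next
        case False
        then have "a \<in> ?L'" using h(2) by simp
        then have "\<exists>u\<in>?L. (u,a) \<in> E\<^sup>*" unfolding mem_even[OF ev] by (elim conjE)
        then obtain u where u: "u \<in> ?L" "(u,a) \<in> E\<^sup>*" by (elim bexE)
        have "(u,b) \<in> E\<^sup>*" using u(2) h(1) by (rule rtrancl_into_rtrancl)
        then have "b \<in> ?L'" unfolding mem_even[OF ev] using bV bC u(1) by blast
        then show False using bL by simp
      qed
    qed
    have B: "b \<in> ?L'" if h: "(a,b)\<in>E" "a \<notin> ?C \<union> ?L'" "b \<in> ?C \<union> ?L'" for a b
    proof (rule ccontr)
      assume "b \<notin> ?L'"
      then have "b \<in> ?C" using h(3) by simp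
      have "a \<notin> ?C" using h(2) by simp
      then have "even j" using IH2[OF h(1) _ \<open>b \<in> ?C\<close>] by simp
      then show False using oj by simp
    qed
    show ?thesis unfolding CS
    proof (rule conjI; intro allI impI)
      fix a b assume h: "(a,b)\<in>E" "a \<in> ?C \<union> ?L'" "b \<notin> ?C \<union> ?L'"
      show "odd (Suc j) \<and> a \<in> ?L'" using A[OF h] by (rule FalseE)
    next
      fix a b assume h: "(a,b)\<in>E" "a \<notin> ?C \<union> ?L'" "b \<in> ?C \<union> ?L'"
      have "even (Suc j)" using False by simp
      then show "even (Suc j) \<and> b \<in> ?L'" using B[OF h] by simp
    qed
  qed
qed


lemma C_sub: "(\<Union>i\<le>j. layer V E v0 i) \<subseteq> V"
  by (simp add: layer_sub UN_least)

lemma grow: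
  assumes "E \<subseteq> V \<times> V" "weakly_connected V E" "v0 \<in> V"
    and ne: "(\<Union>i\<le>j. layer V E v0 i) \<noteq> V"
  shows "\<exists>w. w \<in> layer V E v0 (Suc j) \<and> w \<notin> (\<Union>i\<le>j. layer V E v0 i)"
proof -
  let ?C = "\<Union>i\<le>j. layer V E v0 i"
  let ?L = "layer V E v0 j"
  let ?L' = "layer V E v0 (Suc j)"
  have CV: "?C \<subseteq> V" by (rule C_sub)
  have "\<not> V \<subseteq> ?C" using ne CV by (simp add: subset_antisym)
  then obtain w where w: "w \<in> V" "w \<notin> ?C" by (auto simp only: subset_iff)
  have "v0 \<in> layer V E v0 0" using assms(3) by (simp add: layer_0)
  then have v0C: "v0 \<in> ?C" by (rule UN_I[rotated]) simp
  have "(v0, w) \<in> (E \<union> E\<inverse>)\<^sup>*" using assms(2,3) w(1) unfolding weakly_connected_def by blast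
  from cross_step[OF this v0C w(2)] obtain a b where ab: "(a,b) \<in> E \<union> E\<inverse>" "a \<in> ?C" "b \<notin> ?C"
    by (elim exE conjE)
  note inv = cross_inv[OF assms(1), of v0 j]
  show ?thesis
  proof (cases "(a,b) \<in> E")
    case True
    have "odd j \<and> a \<in> ?L" by (rule conjunct1[OF inv, rule_format, OF True ab(2,3)])
    then have oj: "even (Suc j)" and aL: "a \<in> ?L" by simp_all
    have bV: "b \<in> V" using True assms(1) by blast
    have "(a,b) \<in> E\<^sup>*" using True by (rule r_into_rtrancl)
    then have "b \<in> ?L'" unfolding mem_even[OF oj]
      using aL bV ab(3) by blast
    then show ?thesis using ab(3) by blast
  next
    case False
    then have ba: "(b,a) \<in> E" using ab(1) by simp
    have "even j \<and> a \<in> ?L" by (rule conjunct2[OF inv, rule_format, OF ba ab(3,2)])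
    then have oj: "odd (Suc j)" and aL: "a \<in> ?L" by simp_all
    have bV: "b \<in> V" using ba assms(1) by blast
    have "(b,a) \<in> E\<^sup>*" using ba by (rule r_into_rtrancl)
    then have "b \<in> ?L'" unfolding mem_odd[OF oj]
      using aL bV ab(3) by blast
    then show ?thesis using ab(3) by blast
  qed
qed

lemma cover:
  assumes "finite V" "E \<subseteq> V \<times> V" "weakly_connected V E" "v0 \<in> V"
  shows "(\<Union>i\<le>card V. layer V E v0 i) = V"
proof -
  have "(\<Union>i\<le>j. layer V E v0 i) = V \<or> Suc j \<le> card (\<Union>i\<le>j. layer V E v0 i)" for j
  proof (induction j)
    case 0
    have "v0 \<in> layer V E v0 0" using assms(4) by (simp add: layer_0)
    moreover have "finite (layer V E v0 0)" using finite_subset[OF layer_sub assms(1)] .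
    ultimately have "0 < card (layer V E v0 0)" using card_gt_0_iff by blast
    then show ?case by simp
  next
    case (Suc j)
    let ?C = "\<Union>i\<le>j. layer V E v0 i"
    let ?L = "layer V E v0 (Suc j)"
    have CS: "(\<Union>i\<le>Suc j. layer V E v0 i) = ?C \<union> ?L"
      by (simp add: atMost_Suc Un_commute)
    have sub: "?C \<union> ?L \<subseteq> V" using C_sub[of V E v0 j] layer_sub[of V E v0 "Suc j"] by (rule Un_least)
    have fin: "finite (?C \<union> ?L)" using finite_subset[OF sub assms(1)] .
    show ?case
    proof (cases "?C = V")
      case True
      then have "?C \<union> ?L = V" using sub by (simp add: Un_absorb2)
      then show ?thesis unfolding CS by (rule disjI1)
    next
      case False
      then have c: "Suc j \<le> card ?C" using Suc.IH by simp
      obtain w where w: "w \<in> ?L" "w \<notin> ?C" using grow[OF assms(2-4) False] by blast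
      have "?C \<subset> ?C \<union> ?L"
      proof
        show "?C \<subseteq> ?C \<union> ?L" by (rule Un_upper1)
        show "?C \<noteq> ?C \<union> ?L" using w by (metis UnCI)
      qed
      then have "card ?C < card (?C \<union> ?L)" using psubset_card_mono[OF fin] by blast
      then show ?thesis unfolding CS using c by simp
    qed
  qed
  then have d: "(\<Union>i\<le>card V. layer V E v0 i) = V \<or> Suc (card V) \<le> card (\<Union>i\<le>card V. layer V E v0 i)" .
  have "card (\<Union>i\<le>card V. layer V E v0 i) \<le> card V"
    using card_mono[OF assms(1) C_sub] .
  then show ?thesis using d by linarith
qed

lemma last_cover:
  assumes "finite V" "E \<subseteq> V \<times> V" "weakly_connected V E" "v0 \<in> V"
  shows "(\<Union>i\<le>last_layer V E v0. layer V E v0 i) = V"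
  unfolding last_layer_def using cover[OF assms] by (rule LeastI)

lemma layer_le_last:
  assumes "finite V" "E \<subseteq> V \<times> V" "weakly_connected V E" "v0 \<in> V"
    and "v \<in> layer V E v0 i"
  shows "i \<le> last_layer V E v0"
proof -
  have "v \<in> V" using layer_sub assms(5) by (rule subsetD)
  then have "v \<in> (\<Union>i\<le>last_layer V E v0. layer V E v0 i)" using last_cover[OF assms(1-4)] by simp
  then obtain k where "k \<in> {..last_layer V E v0}" "v \<in> layer V E v0 k" by (rule UN_E)
  moreover have "i = k" using layer_uniq assms(5) \<open>v \<in> layer V E v0 k\<close> .
  ultimately show ?thesis by simp
qed

lemma dipath_reach:
  assumes "dipath V E Q" "i \<le> k" "k < length Q"
  shows "(Q!i, Q!k) \<in> E\<^sup>*"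
  using assms(2,3)
proof (induction k)
  case 0
  then show ?case by simp
next
  case (Suc k)
  show ?case
  proof (cases "i = Suc k")
    case False
    then have "(Q!i, Q!k) \<in> E\<^sup>*" using Suc by simp
    moreover have "(Q!k, Q!Suc k) \<in> E" using assms(1) Suc.prems by (auto simp: dipath_def)
    ultimately show ?thesis by (rule rtrancl_into_rtrancl)
  qed simp
qed

lemma dipath_conn:
  assumes "dipath V E Q" "x \<in> set Q" "y \<in> set Q"
  shows "(x, y) \<in> E\<^sup>* \<or> (y, x) \<in> E\<^sup>*"
proof -
  obtain i k where "i < length Q" "k < length Q" "x = Q!i" "y = Q!k"
    using assms by (metis in_set_conv_nth)
  then show ?thesis using dipath_reach[OF assms(1)] by (metis nat_le_linear)
qed

lemma path_layers:
  assumes "finite V" "E \<subseteq> V \<times> V" "weakly_connected V E" "v0 \<in> V"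
    and Q: "dipath V E Q"
  shows "\<exists>j\<le>last_layer V E v0. set Q \<subseteq> layer_ext V E v0 j \<union> layer_ext V E v0 (Suc j)"
proof -
  let ?L = "layer V E v0"
  have QV: "set Q \<subseteq> V" using Q by (simp add: dipath_def)
  have hQ: "hd Q \<in> set Q" using Q by (simp add: dipath_def)
  then have "hd Q \<in> V" using QV by (rule rev_subsetD)
  then have "hd Q \<in> (\<Union>i\<le>last_layer V E v0. ?L i)" using last_cover[OF assms(1-4)] by simp
  then obtain i0 where "hd Q \<in> ?L i0" by (rule UN_E)
  then have ex: "\<exists>v\<in>set Q. v \<in> ?L i0" using hQ by blast
  define m where "m = (LEAST m. \<exists>v\<in>set Q. v \<in> ?L m)"
  have "\<exists>v\<in>set Q. v \<in> ?L m" unfolding m_def by (rule LeastI[of _ i0]) (rule ex)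
  then obtain x where x: "x \<in> set Q" "x \<in> ?L m" by (rule bexE)
  have minm: "y \<notin> ?L i" if "y \<in> set Q" "i < m" for y i
  proof
    assume "y \<in> ?L i"
    then have "\<exists>v\<in>set Q. v \<in> ?L i" using that(1) by blast
    then have "m \<le> i" unfolding m_def by (rule Least_le)
    then show False using that(2) by simp
  qed
  have mle: "m \<le> last_layer V E v0" using layer_le_last[OF assms(1-4) x(2)] .
  have key: "y \<in> ?L m \<or> y \<in> ?L (Suc m)" if y: "y \<in> set Q" for y
  proof (rule ccontr)
    assume "\<not> (y \<in> ?L m \<or> y \<in> ?L (Suc m))"
    then have nm: "y \<notin> ?L m" and ny: "y \<notin> ?L (Suc m)" by simp_all
    have yV: "y \<in> V" using QV y by (rule subsetD)
    have nC: "y \<notin> (\<Union>i\<le>m. ?L i)"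
    proof
      assume "y \<in> (\<Union>i\<le>m. ?L i)"
      then obtain i where "i \<in> {..m}" "y \<in> ?L i" by (rule UN_E)
      then show False using nm minm[OF y, of i] by (cases "i = m") simp_all
    qed
    have conn: "(x, y) \<in> E\<^sup>* \<or> (y, x) \<in> E\<^sup>*" using dipath_conn[OF Q x(1) y] .
    show False
    proof (cases "odd (Suc m)")
      case True
      show False
      proof (cases "(y,x) \<in> E\<^sup>*")
        case True
        have "y \<in> ?L (Suc m)" unfolding mem_odd[OF \<open>odd (Suc m)\<close>] using yV nC True x(2) by blast
        then show False using ny by simp
      next
        case False
        then have xy: "(x,y) \<in> E\<^sup>*" using conn by simp
        show False
        proof (cases m)
          case 0
          then have "(v0, x) \<in> E\<^sup>*" using x(2) by (simp add: layer_0)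
          then have "(v0, y) \<in> E\<^sup>*" using xy by (rule rtrancl_trans)
          then have "y \<in> ?L m" using yV 0 by (simp add: layer_0)
          then show False using nm by simp
        next
          case (Suc k)
          have nCk: "y \<notin> (\<Union>i\<le>k. ?L i)" using nC Suc by auto
          have ek: "even (Suc k)" using \<open>odd (Suc m)\<close> Suc by simp
          have "\<exists>u\<in>?L k. (u, x) \<in> E\<^sup>*" using x(2) unfolding Suc mem_even[OF ek] by (elim conjE)
          then obtain u where u: "u \<in> ?L k" "(u, x) \<in> E\<^sup>*" by (rule bexE)
          have "(u, y) \<in> E\<^sup>*" using u(2) xy by (rule rtrancl_trans)
          then have "y \<in> ?L (Suc k)" unfolding mem_even[OF ek] using yV nCk u(1) by blast
          then show False using nm Suc by simp
        qed
      qed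
    next
      case False
      then have em: "even (Suc m)" by simp
      then obtain k where Suc: "m = Suc k" by (cases m) simp_all
      have nCk: "y \<notin> (\<Union>i\<le>k. ?L i)" using nC Suc by auto
      have ok: "odd (Suc k)" using em Suc by simp
      show False
      proof (cases "(x,y) \<in> E\<^sup>*")
        case True
        have "y \<in> ?L (Suc m)" unfolding mem_even[OF em] using yV nC True x(2) by blast
        then show False using ny by simp
      next
        case False
        then have yx: "(y,x) \<in> E\<^sup>*" using conn by simp
        have "\<exists>u\<in>?L k. (x, u) \<in> E\<^sup>*" using x(2) unfolding Suc mem_odd[OF ok] by (elim conjE)
        then obtain u where u: "u \<in> ?L k" "(x, u) \<in> E\<^sup>*" by (rule bexE)
        have "(y, u) \<in> E\<^sup>*" using yx u(2) by (rule rtrancl_trans)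
        then have "y \<in> ?L (Suc k)" unfolding mem_odd[OF ok] using yV nCk u(1) by blast
        then show False using nm Suc by simp
      qed
    qed
  qed
  have "set Q \<subseteq> layer_ext V E v0 m \<union> layer_ext V E v0 (Suc m)"
  proof
    fix y assume y: "y \<in> set Q"
    show "y \<in> layer_ext V E v0 m \<union> layer_ext V E v0 (Suc m)"
    proof (cases "y \<in> ?L m")
      case True
      then show ?thesis using mle by (simp add: layer_ext_def)
    next
      case False
      then have yS: "y \<in> ?L (Suc m)" using key[OF y] by simp
      have "Suc m \<le> last_layer V E v0" using layer_le_last[OF assms(1-4) yS] .
      then show ?thesis using yS by (simp add: layer_ext_def)
    qed
  qed
  then show ?thesis using mle by blast
qed

theorem mainTheorem8:
  fixes V :: "'a set" and E :: "('a \<times> 'a) set" and v0 :: 'a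
  assumes "finite V" and "E \<subseteq> V \<times> V" and "weakly_connected V E" and "v0 \<in> V"
  shows "(\<forall>Q. dipath V E Q \<longrightarrow>
            (\<exists>j\<le>last_layer V E v0.
               set Q \<subseteq> layer_ext V E v0 j \<union> layer_ext V E v0 (Suc j)))
       \<and> (\<forall>s t. (\<exists>Q. dipath V E Q \<and> hd Q = s \<and> last Q = t) \<longrightarrow>
            (\<exists>j\<le>last_layer V E v0.
               let S = layer_ext V E v0 j \<union> layer_ext V E v0 (Suc j) in
               \<exists>Q. dipath S (E \<inter> S \<times> S) Q \<and> hd Q = s \<and> last Q = t))"
proof (rule conjI; intro allI impI)
  fix Q assume "dipath V E Q"
  then show "\<exists>j\<le>last_layer V E v0. set Q \<subseteq> layer_ext V E v0 j \<union> layer_ext V E v0 (Suc j)"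
    using path_layers[OF assms] by blast
next
  fix s t assume "\<exists>Q. dipath V E Q \<and> hd Q = s \<and> last Q = t"
  then obtain Q where Q: "dipath V E Q" "hd Q = s" "last Q = t" by blast
  obtain j where j: "j \<le> last_layer V E v0" "set Q \<subseteq> layer_ext V E v0 j \<union> layer_ext V E v0 (Suc j)"
    using path_layers[OF assms Q(1)] by blast
  define S where "S = layer_ext V E v0 j \<union> layer_ext V E v0 (Suc j)"
  have QS: "set Q \<subseteq> S" using j(2) unfolding S_def .
  have "dipath S (E \<inter> S \<times> S) Q"
    unfolding dipath_def
  proof (intro conjI allI impI)
    show "Q \<noteq> []" "distinct Q" using Q(1) by (simp_all add: dipath_def)
    show "set Q \<subseteq> S" by (rule QS)
    fix i assume i: "Suc i < length Q"
    have "(Q ! i, Q ! Suc i) \<in> E" using Q(1) i by (simp add: dipath_def)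
    moreover have "Q ! i \<in> S" using QS i by (meson Suc_lessD nth_mem subsetD)
    moreover have "Q ! Suc i \<in> S" using QS i by (meson nth_mem subsetD)
    ultimately show "(Q ! i, Q ! Suc i) \<in> E \<inter> S \<times> S" by simp
  qed
  then show "\<exists>j\<le>last_layer V E v0.
               let S = layer_ext V E v0 j \<union> layer_ext V E v0 (Suc j) in
               \<exists>Q. dipath S (E \<inter> S \<times> S) Q \<and> hd Q = s \<and> last Q = t"
    using j(1) Q unfolding S_def Let_def by blast
qed

end
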